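(* Let $\mathcal{A}\subseteq\wp(\mathcal{G})$. (1) If $\emptyset\notin\mathrm{Ext}(\mathcal{A})$, then $\mathrm{Ext}(\mathcal{A})$ is coherent, $\mathcal{A}\subseteq\mathrm{Ext}(\mathcal{A})$, and $\mathrm{Ext}(\mathcal{A})\subseteq\mathcal{K}$ for every coherent $\mathcal{K}\subseteq\wp(\mathcal{G})$ with $\mathcal{A}\subseteq\mathcal{K}$; i.e. $\mathrm{Ext}(\mathcal{A})$ is the minimal coherent set extending $\mathcal{A}$. (2) If $\emptyset\in\mathrm{Ext}(\mathcal{A})$, then there is no coherent $\mathcal{K}\subseteq\wp(\mathcal{G})$ with $\mathcal{A}\subseteq\mathcal{K}$.
   Context: $\Omega$ is a non-empty set and $\mathcal{G}$ is the set of bounded functions $\Omega\to\mathbb{R}$. $f\geq g$ means pointwise $\geq$; $f\gneq g$ means $f\geq g$ and $f\neq g$; $\mathcal{G}_{\gneq 0}=\{f: f\gneq 0\}$. $\mathrm{posi}(B)=\{\sum_{i=1}^m\lambda_i h_i: m\geq1,\lambda_i>0,h_i\in B\}$, and $\mathcal{E}(E):=\mathrm{posi}(E\cup\mathcal{G}_{\gneq 0})$. A set $\mathcal{K}\subseteq\wp(\mathcal{G})$ is coherent if: (K$_\emptyset$) $\emptyset\notin\mathcal{K}$; (K$_0$) if $A\in\mathcal{K}$ then $A\setminus\{0\}\in\mathcal{K}$; (K$_{\gneq0}$) if $g\in\mathcal{G}_{\gneq0}$ then $\{g\}\in\mathcal{K}$; (K$_\supseteq$) if $A\in\mathcal{K}$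 and $B\supseteq A$ then $B\in\mathcal{K}$; (K$_{\mathrm{Dom}}$) if $A\in\mathcal{K}$ and for each $g\in A$, $f_g$ is a gamble with $f_g\geq g$, then $\{f_g: g\in A\}\in\mathcal{K}$; (K$_{\mathrm{Add}}$) if $A_1,\ldots,A_n\in\mathcal{K}$ (finitely many) and for each $\langle g_1,\ldots,g_n\rangle\in A_1\times\cdots\times A_n$, $f_{\langle g_1,\ldots,g_n\rangle}$ is some member of $\mathrm{posi}(\{g_1,\ldots,g_n\})$, then $\{f_{\langle g_1,\ldots,g_n\rangle}:\langle g_1,\ldots,g_n\rangle\in A_1\times\cdots\times A_n\}\in\mathcal{K}$. Definition of $\mathrm{Ext}$: if $\mathcal{A}\neq\emptyset$, $B\in\mathrm{Ext}(\mathcal{A})$ iff there are finitely many $A_1,\ldots,A_n\in\mathcal{A}$ ($n\geq1$) such that for each $\langle g_1,\ldots,g_n\rangle\in A_1\times\cdots\times A_n$ with $0\notin\mathcal{E}(\{g_1,\ldots,g_n\})$, there is some $f\in B$ with $f\in\mathcal{E}(\{g_1,\ldots,g_n\})$. If $\mathcal{A}=\emptyset$, $B\in\mathrm{Ext}(\emptyset)$ iff $B\cap\mathcal{G}_{\gneq0}\neq\emptyset$. *)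

theory Defs
  imports Complex_Main "HOL-Library.FuncSet"
begin

definition gambles :: "('w \<Rightarrow> real) set" where
  "gambles = {f. \<exists>B. \<forall>w. \<bar>f w\<bar> \<le> B}"

definition gneq :: "('w \<Rightarrow> real) \<Rightarrow> ('w \<Rightarrow> real) \<Rightarrow> bool" where
  "gneq f g \<longleftrightarrow> (\<forall>w. f w \<ge> g w) \<and> f \<noteq> g"

definition gpos :: "('w \<Rightarrow> real) set" where
  "gpos = {f \<in> gambles. gneq f (\<lambda>_. 0)}"

definition posi :: "('w \<Rightarrow> real) set \<Rightarrow> ('w \<Rightarrow> real) set" where
  "posi B = {f. \<exists>m::nat. \<exists>lam h. m \<ge> 1 \<and> (\<forall>i<m. lam i > (0::real) \<and> h i \<in> B)
              \<and> f = (\<lambda>w. \<Sum>i<m. lam i * h i w)}"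

definition EE :: "('w \<Rightarrow> real) set \<Rightarrow> ('w \<Rightarrow> real) set" where
  "EE E = posi (E \<union> gpos)"

definition coherent :: "('w \<Rightarrow> real) set set \<Rightarrow> bool" where
  "coherent K \<longleftrightarrow>
     {} \<notin> K
   \<and> (\<forall>A\<in>K. A - {\<lambda>_. 0} \<in> K)
   \<and> (\<forall>g\<in>gpos. {g} \<in> K)
   \<and> (\<forall>A\<in>K. \<forall>B. A \<subseteq> B \<and> B \<subseteq> gambles \<longrightarrow> B \<in> K)
   \<and> (\<forall>A\<in>K. \<forall>F. (\<forall>g\<in>A. F g \<in> gambles \<and> (\<forall>w. F g w \<ge> g w)) \<longrightarrow> F ` A \<in> K)
   \<and> (\<forall>n::nat. \<forall>As F. n \<ge> 1 \<and> (\<forall>i<n. As i \<in> K)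
        \<and> (\<forall>g\<in>Pi\<^sub>E {..<n} As. F g \<in> posi (g ` {..<n}))
        \<longrightarrow> F ` (Pi\<^sub>E {..<n} As) \<in> K)"

definition Ext :: "('w \<Rightarrow> real) set set \<Rightarrow> ('w \<Rightarrow> real) set set" where
  "Ext \<A> = (if \<A> = {} then {B. B \<subseteq> gambles \<and> B \<inter> gpos \<noteq> {}}
    else {B. B \<subseteq> gambles \<and> (\<exists>n::nat. \<exists>As. n \<ge> 1 \<and> (\<forall>i<n. As i \<in> \<A>) \<and>
            (\<forall>g\<in>Pi\<^sub>E {..<n} As. (\<lambda>_. 0) \<notin> EE (g ` {..<n}) \<longrightarrow>
                 (\<exists>f\<in>B. f \<in> EE (g ` {..<n}))))})"

end

theory Submission
  imports Defs
begin


lemma sum_split_nat: "sum f {..<m+n} = sum f {..<m} + sum (\<lambda>i. f (m+i)) {..<(n::nat)}"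
  by (induction n) (auto simp: add.assoc)

lemma gpos_iff: "f \<in> gpos \<longleftrightarrow> f \<in> gambles \<and> (\<forall>w. f w \<ge> 0) \<and> (\<exists>w. f w > 0)"
  unfolding gpos_def gneq_def fun_eq_iff by (auto simp: less_le)

lemma gambles_add: "a \<in> gambles \<Longrightarrow> b \<in> gambles \<Longrightarrow> (\<lambda>w. a w + b w) \<in> gambles"
proof -
  assume "a \<in> gambles" "b \<in> gambles"
  then obtain B1 B2 where "\<forall>w. \<bar>a w\<bar> \<le> B1" "\<forall>w. \<bar>b w\<bar> \<le> B2" unfolding gambles_def by auto
  hence "\<bar>a w + b w\<bar> \<le> B1 + B2" for w using abs_triangle_ineq[of "a w" "b w"] by (meson add_mono order_trans)
  thus ?thesis unfolding gambles_def by auto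
qed

lemma gambles_scale: "a \<in> gambles \<Longrightarrow> (\<lambda>w. c * a w) \<in> gambles"
proof -
  assume "a \<in> gambles"
  then obtain B1 where "\<forall>w. \<bar>a w\<bar> \<le> B1" unfolding gambles_def by auto
  hence "\<forall>w. \<bar>c * a w\<bar> \<le> \<bar>c\<bar> * B1" by (simp add: abs_mult mult_left_mono)
  thus ?thesis unfolding gambles_def by auto
qed

lemma gambles_zero: "(\<lambda>_. 0) \<in> gambles"
  unfolding gambles_def by auto

lemma gambles_diff: "a \<in> gambles \<Longrightarrow> b \<in> gambles \<Longrightarrow> (\<lambda>w. a w - b w) \<in> gambles"
  using gambles_add[of a "\<lambda>w. (-1) * b w"] gambles_scale[of b "-1"] by simp

lemma posi_mem: "h \<in> B \<Longrightarrow> h \<in> posi B"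
  unfolding posi_def
  by (rule CollectI, rule exI[of _ 1], rule exI[of _ "\<lambda>_. 1"], rule exI[of _ "\<lambda>_. h"]) auto

lemma posi_scale: "a \<in> posi B \<Longrightarrow> c > 0 \<Longrightarrow> (\<lambda>w. c * a w) \<in> posi B"
proof -
  assume "a \<in> posi B" "c > 0"
  then obtain m :: nat and lam :: "nat \<Rightarrow> real" and h where
    H: "1 \<le> m" "\<forall>i<m. 0 < lam i \<and> h i \<in> B" "a = (\<lambda>w. \<Sum>i<m. lam i * h i w)"
    unfolding posi_def by blast
  have "(\<lambda>w. c * a w) = (\<lambda>w. \<Sum>i<m. (c * lam i) * h i w)"
    using H(3) by (simp add: sum_distrib_left mult.assoc)
  moreover have "\<forall>i<m. 0 < c * lam i \<and> h i \<in> B" using H(2) \<open>c > 0\<close> by simp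
  ultimately show ?thesis using H(1) unfolding posi_def
    by (intro CollectI exI[of _ m] exI[of _ "\<lambda>i. c * lam i"] exI[of _ h]) auto
qed

lemma posi_add: "a \<in> posi B \<Longrightarrow> b \<in> posi B \<Longrightarrow> (\<lambda>w. a w + b w) \<in> posi B"
proof -
  assume "a \<in> posi B" "b \<in> posi B"
  then obtain m1 m2 :: nat and l1 l2 :: "nat \<Rightarrow> real" and h1 h2 where
    1: "1 \<le> m1" "\<forall>i<m1. 0 < l1 i \<and> h1 i \<in> B" "a = (\<lambda>w. \<Sum>i<m1. l1 i * h1 i w)"
    and 2: "1 \<le> m2" "\<forall>i<m2. 0 < l2 i \<and> h2 i \<in> B" "b = (\<lambda>w. \<Sum>i<m2. l2 i * h2 i w)"
    unfolding posi_def by blast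
  define l where "l i = (if i < m1 then l1 i else l2 (i - m1))" for i
  define h where "h i = (if i < m1 then h1 i else h2 (i - m1))" for i
  have "(\<lambda>w. a w + b w) = (\<lambda>w. \<Sum>i<m1+m2. l i * h i w)"
    using 1(3) 2(3) by (simp add: sum_split_nat l_def h_def)
  moreover have "\<forall>i<m1+m2. 0 < l i \<and> h i \<in> B" using 1 2 by (auto simp: l_def h_def)
  moreover have "1 \<le> m1 + m2" using 1 by simp
  ultimately show ?thesis unfolding posi_def
    by (intro CollectI exI[of _ "m1+m2"] exI[of _ l] exI[of _ h]) auto
qed

lemma posi_induct:
  assumes "B \<subseteq> X" and add: "\<And>a b. a \<in> X \<Longrightarrow> b \<in> X \<Longrightarrow> (\<lambda>w. a w + b w) \<in> X"
    and sc: "\<And>a c. a \<in> X \<Longrightarrow> (c::real) > 0 \<Longrightarrow> (\<lambda>w. c * a w) \<in> X"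
  shows "posi B \<subseteq> X"
proof -
  have "\<forall>lam h. m \<ge> 1 \<longrightarrow> (\<forall>i<m. lam i > (0::real) \<and> h i \<in> B) \<longrightarrow> (\<lambda>w. \<Sum>i<m. lam i * h i w) \<in> X" for m :: nat
  proof (induction m)
    case 0 then show ?case by simp
  next
    case (Suc m)
    show ?case
    proof (intro allI impI)
      fix lam :: "nat \<Rightarrow> real" and h assume "1 \<le> Suc m" and H: "\<forall>i<Suc m. 0 < lam i \<and> h i \<in> B"
      have last: "(\<lambda>w. lam m * h m w) \<in> X" using H assms(1) by (intro sc) auto
      show "(\<lambda>w. \<Sum>i<Suc m. lam i * h i w) \<in> X"
      proof (cases "m = 0")
        case True then show ?thesis using last by simp
      next
        case False
        hence "(\<lambda>w. \<Sum>i<m. lam i * h i w) \<in> X" using Suc.IH H by auto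
        from add[OF this last] show ?thesis by simp
      qed
    qed
  qed
  thus ?thesis unfolding posi_def by blast
qed

lemma posi_mono: "B \<subseteq> C \<Longrightarrow> posi B \<subseteq> posi C"
  unfolding posi_def by blast

lemma posi_posi: "posi (posi B) \<subseteq> posi B"
  by (rule posi_induct) (auto intro: posi_add posi_scale)

lemma posi_gambles: "B \<subseteq> gambles \<Longrightarrow> posi B \<subseteq> gambles"
  by (rule posi_induct) (auto intro: gambles_add gambles_scale)

lemma posi_gpos: "posi (gpos :: ('w \<Rightarrow> real) set) \<subseteq> gpos"
proof (rule posi_induct)
  fix a b :: "'w \<Rightarrow> real" assume a: "a \<in> gpos" and b: "b \<in> gpos"
  then obtain w where "a w > 0" by (auto simp: gpos_iff)
  with a b show "(\<lambda>w. a w + b w) \<in> gpos"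
    by (auto simp: gpos_iff gambles_add intro!: exI[of _ w] add_pos_nonneg add_nonneg_nonneg)
next
  fix a :: "'w \<Rightarrow> real" and c :: real assume a: "a \<in> gpos" and c: "c > 0"
  then obtain w where "a w > 0" by (auto simp: gpos_iff)
  with a c show "(\<lambda>w. c * a w) \<in> gpos"
    by (auto simp: gpos_iff gambles_scale intro!: exI[of _ w])
qed auto

lemma posi_split:
  assumes "f \<in> posi (S \<union> P)"
  shows "f \<in> posi P \<or> (\<exists>a\<in>posi S. f = a \<or> (\<exists>b\<in>posi P. f = (\<lambda>w. a w + b w)))"
proof -
  let ?X = "posi P \<union> {f. \<exists>a\<in>posi S. f = a \<or> (\<exists>b\<in>posi P. f = (\<lambda>w. a w + b w))}"
  have "posi (S \<union> P) \<subseteq> ?X"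
  proof (rule posi_induct)
    show "S \<union> P \<subseteq> ?X" by (auto intro: posi_mem)
  next
    fix x y assume x: "x \<in> ?X" and y: "y \<in> ?X"
    show "(\<lambda>w. x w + y w) \<in> ?X"
    proof -
      { assume "x \<in> posi P" "y \<in> posi P" hence ?thesis by (auto intro: posi_add) }
      moreover
      { fix a assume xa: "x \<in> posi P" "a \<in> posi S" "y = a \<or> (\<exists>b\<in>posi P. y = (\<lambda>w. a w + b w))"
        hence ?thesis
        proof (elim disjE bexE)
          assume "y = a" thus ?thesis using xa
            by (intro UnI2 CollectI bexI[of _ a] disjI2 bexI[of _ x]) (auto simp: algebra_simps)
        next
          fix b assume "b \<in> posi P" "y = (\<lambda>w. a w + b w)" thus ?thesis using xa
            by (intro UnI2 CollectI bexI[of _ a] disjI2 bexI[of _ "\<lambda>w. x w + b w"])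
               (auto intro: posi_add simp: algebra_simps)
        qed }
      moreover
      { fix a assume ya: "y \<in> posi P" "a \<in> posi S" "x = a \<or> (\<exists>b\<in>posi P. x = (\<lambda>w. a w + b w))"
        hence ?thesis
        proof (elim disjE bexE)
          assume "x = a" thus ?thesis using ya
            by (intro UnI2 CollectI bexI[of _ a] disjI2 bexI[of _ y]) (auto simp: algebra_simps)
        next
          fix b assume "b \<in> posi P" "x = (\<lambda>w. a w + b w)" thus ?thesis using ya
            by (intro UnI2 CollectI bexI[of _ a] disjI2 bexI[of _ "\<lambda>w. b w + y w"])
               (auto intro: posi_add simp: algebra_simps)
        qed }
      moreover
      { fix a a' assume a: "a \<in> posi S" "x = a \<or> (\<exists>b\<in>posi P. x = (\<lambda>w. a w + b w))"
          and a': "a' \<in> posi S" "y = a' \<or> (\<exists>b\<in>posi P. y = (\<lambda>w. a' w + b w))"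
        have s: "(\<lambda>w. a w + a' w) \<in> posi S" using a a' by (intro posi_add)
        have ?thesis using a a'
        proof (elim disjE bexE)
          fix b b' assume "b \<in> posi P" "b' \<in> posi P" "x = (\<lambda>w. a w + b w)" "y = (\<lambda>w. a' w + b' w)"
          thus ?thesis using s
            by (intro UnI2 CollectI bexI[OF _ s] disjI2 bexI[of _ "\<lambda>w. b w + b' w"])
               (auto intro: posi_add simp: algebra_simps)
        next
          fix b assume "b \<in> posi P" "x = (\<lambda>w. a w + b w)" "y = a'"
          thus ?thesis using s
            by (intro UnI2 CollectI bexI[OF _ s] disjI2 bexI[of _ b]) (auto simp: algebra_simps)
        next
          fix b assume "b \<in> posi P" "y = (\<lambda>w. a' w + b w)" "x = a"
          thus ?thesis using s
            by (intro UnI2 CollectI bexI[OF _ s] disjI2 bexI[of _ b]) (auto simp: algebra_simps)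
        next
          assume "x = a" "y = a'"
          thus ?thesis using s by auto
        qed }
      ultimately show ?thesis using x y by blast
    qed
  next
    fix x and c :: real assume x: "x \<in> ?X" and c: "c > 0"
    show "(\<lambda>w. c * x w) \<in> ?X" using x
    proof (elim UnE CollectE bexE disjE)
      assume "x \<in> posi P" thus ?thesis using c by (auto intro: posi_scale)
    next
      fix a assume "a \<in> posi S" "x = a" thus ?thesis using c by (auto intro: posi_scale)
    next
      fix a b assume "a \<in> posi S" "b \<in> posi P" "x = (\<lambda>w. a w + b w)"
      thus ?thesis using c
        by (intro UnI2 CollectI bexI[of _ "\<lambda>w. c * a w"] disjI2 bexI[of _ "\<lambda>w. c * b w"])
           (auto intro: posi_scale simp: algebra_simps)
    qed
  qed
  thus ?thesis using assms by blast
qed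

lemma EE_split:
  assumes "f \<in> EE S"
  shows "f \<in> gpos \<or> (\<exists>a\<in>posi S. \<forall>w. a w \<le> f w)"
proof -
  from posi_split[of f S gpos] assms[unfolded EE_def]
  have "f \<in> posi gpos \<or> (\<exists>a\<in>posi S. f = a \<or> (\<exists>b\<in>posi gpos. f = (\<lambda>w. a w + b w)))" .
  thus ?thesis
  proof (elim disjE bexE)
    assume "f \<in> posi gpos" thus ?thesis using posi_gpos by blast
  next
    fix a assume "a \<in> posi S" "f = a" thus ?thesis by auto
  next
    fix a b assume "a \<in> posi S" "b \<in> posi gpos" "f = (\<lambda>w. a w + b w)"
    moreover hence "\<forall>w. b w \<ge> 0" using posi_gpos by (auto simp: gpos_iff)
    ultimately show ?thesis by (intro disjI2 bexI[of _ a]) auto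
  qed
qed

lemma EE_mono: "S \<subseteq> T \<Longrightarrow> EE S \<subseteq> EE T"
  unfolding EE_def by (rule posi_mono) blast

lemma EE_posi: "posi (EE S) \<subseteq> EE S"
  unfolding EE_def by (rule posi_posi)

lemma EE_base: "S \<subseteq> EE S" "gpos \<subseteq> EE S"
  unfolding EE_def by (auto intro: posi_mem)

lemma EE_up:
  assumes "f \<in> EE S" "f \<in> gambles" "f' \<in> gambles" "\<forall>w. f w \<le> f' w"
  shows "f' \<in> EE S"
proof (cases "f' = f")
  case True thus ?thesis using assms by simp
next
  case False
  then obtain w where "f' w \<noteq> f w" by auto
  hence "(\<lambda>w. f' w - f w) \<in> gpos" using assms
    by (auto simp: gpos_iff gambles_diff intro!: exI[of _ w] simp: less_le)
  hence "(\<lambda>w. f w + (f' w - f w)) \<in> EE S" using assms(1) EE_base(2) unfolding EE_def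
    by (intro posi_add) (auto intro: posi_mem)
  thus ?thesis by simp
qed

lemma gpos_up:
  assumes "f \<in> gpos" "f' \<in> gambles" "\<forall>w. f w \<le> f' w"
  shows "f' \<in> gpos"
proof -
  from assms obtain w where "f w > 0" by (auto simp: gpos_iff)
  thus ?thesis using assms by (auto simp: gpos_iff intro!: exI[of _ w]) (meson order_trans less_le_trans)+
qed



lemma combine:
  fixes n :: nat and ns :: "nat \<Rightarrow> nat" and Ass :: "nat \<Rightarrow> nat \<Rightarrow> 'a set"
  assumes A0: "A0 \<in> \<A>" and H: "\<forall>i<n. \<forall>j<ns i. Ass i j \<in> \<A>"
  shows "\<exists>(N::nat) Cs. N \<ge> 1 \<and> (\<forall>j<N. Cs j \<in> \<A>) \<and>
     (\<forall>g\<in>Pi\<^sub>E {..<N} Cs. \<forall>i<n. \<exists>g'\<in>Pi\<^sub>E {..<ns i} (Ass i). g' ` {..<ns i} \<subseteq> g ` {..<N})"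
  using H
proof (induction n)
  case 0
  show ?case using A0 by (intro exI[of _ 1] exI[of _ "\<lambda>_. A0"]) auto
next
  case (Suc n)
  have "\<forall>i<n. \<forall>j<ns i. Ass i j \<in> \<A>" using Suc.prems by auto
  from Suc.IH[OF this] obtain N :: nat and Cs where N: "N \<ge> 1" "\<forall>j<N. Cs j \<in> \<A>"
    and G: "\<forall>g\<in>Pi\<^sub>E {..<N} Cs. \<forall>i<n. \<exists>g'\<in>Pi\<^sub>E {..<ns i} (Ass i). g' ` {..<ns i} \<subseteq> g ` {..<N}"
    by blast
  define Cs' where "Cs' j = (if j < N then Cs j else Ass n (j - N))" for j
  have "\<forall>j<N + ns n. Cs' j \<in> \<A>" using N Suc.prems by (auto simp: Cs'_def)
  moreover have "\<forall>g\<in>Pi\<^sub>E {..<N + ns n} Cs'. \<forall>i<Suc n.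
      \<exists>g'\<in>Pi\<^sub>E {..<ns i} (Ass i). g' ` {..<ns i} \<subseteq> g ` {..<N + ns n}"
  proof (intro ballI allI impI)
    fix g i assume g: "g \<in> Pi\<^sub>E {..<N + ns n} Cs'" and i: "i < Suc n"
    show "\<exists>g'\<in>Pi\<^sub>E {..<ns i} (Ass i). g' ` {..<ns i} \<subseteq> g ` {..<N + ns n}"
    proof (cases "i < n")
      case True
      have "g j \<in> Cs j" if "j < N" for j
        using g that PiE_mem[OF g, of j] by (simp add: Cs'_def)
      hence r: "restrict g {..<N} \<in> Pi\<^sub>E {..<N} Cs" by auto
      obtain g' where "g' \<in> Pi\<^sub>E {..<ns i} (Ass i)"
        "g' ` {..<ns i} \<subseteq> restrict g {..<N} ` {..<N}" using G[rule_format, OF r True] by blast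
      moreover have "restrict g {..<N} ` {..<N} \<subseteq> g ` {..<N + ns n}" by auto
      ultimately show ?thesis by blast
    next
      case False
      hence "i = n" using i by simp
      define g' where "g' j = (if j < ns n then g (N + j) else undefined)" for j
      have "g (N + j) \<in> Ass n j" if "j < ns n" for j
        using PiE_mem[OF g, of "N + j"] that by (simp add: Cs'_def)
      hence "g' \<in> Pi\<^sub>E {..<ns n} (Ass n)" by (auto simp: g'_def PiE_iff extensional_def)
      moreover have "g' ` {..<ns n} \<subseteq> g ` {..<N + ns n}" by (auto simp: g'_def)
      ultimately show ?thesis using \<open>i = n\<close> by blast
    qed
  qed
  moreover have "N + ns n \<ge> 1" using N by simp
  ultimately show ?case by blast
qed

lemma Ext_sub: "B \<in> Ext \<A> \<Longrightarrow> B \<subseteq> gambles"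
  unfolding Ext_def by (auto split: if_splits)

lemma Ext_empty: "Ext {} = {B. B \<subseteq> gambles \<and> B \<inter> gpos \<noteq> {}}"
  unfolding Ext_def by simp

lemma Ext_ne: "\<A> \<noteq> {} \<Longrightarrow> B \<in> Ext \<A> \<longleftrightarrow> B \<subseteq> gambles \<and> (\<exists>n::nat. \<exists>As. n \<ge> 1 \<and> (\<forall>i<n. As i \<in> \<A>) \<and>
            (\<forall>g\<in>Pi\<^sub>E {..<n} As. (\<lambda>_. 0) \<notin> EE (g ` {..<n}) \<longrightarrow>
                 (\<exists>f\<in>B. f \<in> EE (g ` {..<n}))))"
  unfolding Ext_def by simp

lemma minimal:
  fixes K :: "('w \<Rightarrow> real) set set"
  assumes K: "coherent K" and AK: "\<A> \<subseteq> K" and B: "B \<in> Ext \<A>"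
  shows "B \<in> K"
proof -
  note Kd = K[unfolded coherent_def]
  note Kz = Kd[THEN conjunct2, THEN conjunct1]
  note Kp = Kd[THEN conjunct2, THEN conjunct2, THEN conjunct1]
  note Ksup = Kd[THEN conjunct2, THEN conjunct2, THEN conjunct2, THEN conjunct1]
  note Kdom = Kd[THEN conjunct2, THEN conjunct2, THEN conjunct2, THEN conjunct2, THEN conjunct1]
  note Kadd = Kd[THEN conjunct2, THEN conjunct2, THEN conjunct2, THEN conjunct2, THEN conjunct2]
  have Bg: "B \<subseteq> gambles" using B by (rule Ext_sub)
  show ?thesis
  proof (cases "B \<inter> gpos = {}")
    case False
    then obtain g where g: "g \<in> B" "g \<in> gpos" by blast
    have "{g} \<in> K" using Kp g(2) by blast
    moreover have "{g} \<subseteq> B" using g(1) by simp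
    ultimately show ?thesis using Ksup Bg by blast
  next
    case True
    have ne: "\<A> \<noteq> {}"
    proof
      assume "\<A> = {}"
      with B have "B \<inter> gpos \<noteq> {}" by (simp add: Ext_empty)
      with True show False by simp
    qed
    then obtain n :: nat and As where n: "n \<ge> 1" and As: "\<forall>i<n. As i \<in> \<A>" and
      W: "\<forall>g\<in>Pi\<^sub>E {..<n} As. (\<lambda>_. 0) \<notin> EE (g ` {..<n}) \<longrightarrow> (\<exists>f\<in>B. f \<in> EE (g ` {..<n}))"
      using B unfolding Ext_ne[OF ne] by blast
    define P where "P g a \<longleftrightarrow> a \<in> posi (g ` {..<n}) \<and> ((\<forall>w. a w \<le> 0) \<or> (\<exists>f\<in>B. \<forall>w. a w \<le> f w))"
      for g and a :: "'w \<Rightarrow> real"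
    have ex: "\<exists>a. P g a" if g: "g \<in> Pi\<^sub>E {..<n} As" for g
    proof (cases "(\<lambda>_. 0) \<in> EE (g ` {..<n})")
      case True
      have "(\<lambda>_. 0::real) \<notin> gpos" by (auto simp: gpos_iff)
      with EE_split[OF True] obtain a where "a \<in> posi (g ` {..<n})" "\<forall>w. a w \<le> 0" by auto
      thus ?thesis unfolding P_def by blast
    next
      case False
      with W g obtain f where f: "f \<in> B" "f \<in> EE (g ` {..<n})" by blast
      with True have "f \<notin> gpos" by blast
      with EE_split[OF f(2)] obtain a where "a \<in> posi (g ` {..<n})" "\<forall>w. a w \<le> f w" by auto
      thus ?thesis unfolding P_def using f by blast
    qed
    define F1 where "F1 g = (SOME a. P g a)" for g
    have F1: "P g (F1 g)" if "g \<in> Pi\<^sub>E {..<n} As" for g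
      unfolding F1_def using ex[OF that] by (rule someI_ex)
    have S1: "F1 ` Pi\<^sub>E {..<n} As \<in> K"
    proof (rule Kadd[rule_format, of n As F1], intro conjI)
      show "\<forall>i<n. As i \<in> K" using As AK by blast
      show "\<forall>g\<in>Pi\<^sub>E {..<n} As. F1 g \<in> posi (g ` {..<n})" using F1 unfolding P_def by blast
    qed (rule n)
    define F2 where "F2 u = (if \<forall>w. u w \<le> 0 then (\<lambda>_. 0::real) else (SOME f. f \<in> B \<and> (\<forall>w. u w \<le> f w)))" for u
    have F2: "F2 u \<in> gambles \<and> (\<forall>w. F2 u w \<ge> u w) \<and> (F2 u = (\<lambda>_. 0) \<or> F2 u \<in> B)"
      if u: "u \<in> F1 ` Pi\<^sub>E {..<n} As" for u
    proof (cases "\<forall>w. u w \<le> 0")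
      case True thus ?thesis by (simp add: F2_def gambles_zero)
    next
      case False
      from u obtain g where g: "g \<in> Pi\<^sub>E {..<n} As" "u = F1 g" by blast
      with F1[OF g(1)] False have ex2: "\<exists>f. f \<in> B \<and> (\<forall>w. u w \<le> f w)" unfolding P_def by blast
      have "F2 u \<in> B \<and> (\<forall>w. u w \<le> F2 u w)" unfolding F2_def if_not_P[OF False] by (rule someI_ex[OF ex2])
      thus ?thesis using Bg by blast
    qed
    have S2: "F2 ` (F1 ` Pi\<^sub>E {..<n} As) \<in> K"
      by (rule Kdom[rule_format, OF S1]) (use F2 in blast)
    hence "F2 ` (F1 ` Pi\<^sub>E {..<n} As) - {\<lambda>_. 0} \<in> K" by (rule Kz[rule_format])
    moreover have "F2 ` (F1 ` Pi\<^sub>E {..<n} As) - {\<lambda>_. 0} \<subseteq> B" using F2 by blast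
    ultimately show ?thesis using Ksup[rule_format] Bg by blast
  qed
qed



lemma PiE_gambles_posi:
  assumes "\<forall>i<n. Bs i \<subseteq> gambles" "h \<in> Pi\<^sub>E {..<n} Bs" "F h \<in> posi (h ` {..<n})"
  shows "F h \<in> gambles"
proof -
  have "h ` {..<n} \<subseteq> gambles" using assms(1,2) by (auto simp: PiE_iff)
  thus ?thesis using posi_gambles assms(3) by blast
qed

lemma zero_not_gpos: "(\<lambda>_. 0::real) \<notin> gpos"
  by (simp add: gpos_iff)

lemma coh_empty: "coherent (Ext ({} :: ('w \<Rightarrow> real) set set))"
  unfolding coherent_def Ext_empty
proof (intro conjI)
  show "{} \<notin> {B. B \<subseteq> gambles \<and> B \<inter> gpos \<noteq> {}}" by simp
  show "\<forall>A\<in>{B::('w \<Rightarrow> real) set. B \<subseteq> gambles \<and> B \<inter> gpos \<noteq> {}}. A - {\<lambda>_. 0} \<in> {B. B \<subseteq> gambles \<and> B \<inter> gpos \<noteq> {}}"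
  proof
    fix A :: "('w \<Rightarrow> real) set" assume "A \<in> {B. B \<subseteq> gambles \<and> B \<inter> gpos \<noteq> {}}"
    then obtain g where "g \<in> A" "g \<in> gpos" "A \<subseteq> gambles" by blast
    moreover hence "g \<noteq> (\<lambda>_. 0)" using zero_not_gpos by metis
    ultimately show "A - {\<lambda>_. 0} \<in> {B. B \<subseteq> gambles \<and> B \<inter> gpos \<noteq> {}}" by blast
  qed
  show "\<forall>g\<in>gpos. {g} \<in> {B::('w \<Rightarrow> real) set. B \<subseteq> gambles \<and> B \<inter> gpos \<noteq> {}}"
    by (auto simp: gpos_iff)
  show "\<forall>A\<in>{B::('w \<Rightarrow> real) set. B \<subseteq> gambles \<and> B \<inter> gpos \<noteq> {}}. \<forall>B. A \<subseteq> B \<and> B \<subseteq> gambles \<longrightarrow> B \<in> {B. B \<subseteq> gambles \<and> B \<inter> gpos \<noteq> {}}"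
    by blast
  show "\<forall>A\<in>{B::('w \<Rightarrow> real) set. B \<subseteq> gambles \<and> B \<inter> gpos \<noteq> {}}. \<forall>F. (\<forall>g\<in>A. F g \<in> gambles \<and> (\<forall>w. g w \<le> F g w)) \<longrightarrow>
       F ` A \<in> {B. B \<subseteq> gambles \<and> B \<inter> gpos \<noteq> {}}"
  proof (intro ballI allI impI)
    fix A :: "('w \<Rightarrow> real) set" and F assume A: "A \<in> {B. B \<subseteq> gambles \<and> B \<inter> gpos \<noteq> {}}"
      and F: "\<forall>g\<in>A. F g \<in> gambles \<and> (\<forall>w. g w \<le> F g w)"
    from A obtain g where g: "g \<in> A" "g \<in> gpos" by blast
    have "F g \<in> gpos" using gpos_up[OF g(2)] F g(1) by blast
    thus "F ` A \<in> {B. B \<subseteq> gambles \<and> B \<inter> gpos \<noteq> {}}" using F g(1) by blast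
  qed
  show "\<forall>n::nat. \<forall>As F. n \<ge> 1 \<and> (\<forall>i<n. As i \<in> {B::('w \<Rightarrow> real) set. B \<subseteq> gambles \<and> B \<inter> gpos \<noteq> {}})
        \<and> (\<forall>g\<in>Pi\<^sub>E {..<n} As. F g \<in> posi (g ` {..<n}))
        \<longrightarrow> F ` (Pi\<^sub>E {..<n} As) \<in> {B. B \<subseteq> gambles \<and> B \<inter> gpos \<noteq> {}}"
  proof (intro allI impI, elim conjE)
    fix n :: nat and As :: "nat \<Rightarrow> ('w \<Rightarrow> real) set" and F
    assume n: "n \<ge> 1" and As: "\<forall>i<n. As i \<in> {B. B \<subseteq> gambles \<and> B \<inter> gpos \<noteq> {}}"
      and F: "\<forall>g\<in>Pi\<^sub>E {..<n} As. F g \<in> posi (g ` {..<n})"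
    have Asg: "\<forall>i<n. As i \<subseteq> gambles" using As by blast
    have sub: "F ` (Pi\<^sub>E {..<n} As) \<subseteq> gambles"
      using PiE_gambles_posi[OF Asg] F by blast
    have "\<forall>i<n. \<exists>x. x \<in> As i \<inter> gpos" using As by blast
    hence "\<forall>i. \<exists>x. i < n \<longrightarrow> x \<in> As i \<inter> gpos" by blast
    then obtain hh where hh: "\<forall>i. i < n \<longrightarrow> hh i \<in> As i \<inter> gpos" by (metis choice)
    define h where "h = restrict hh {..<n}"
    have h: "h \<in> Pi\<^sub>E {..<n} As" using hh by (auto simp: h_def)
    have "h ` {..<n} \<subseteq> gpos" using hh by (auto simp: h_def)
    hence "posi (h ` {..<n}) \<subseteq> gpos" using posi_mono[of "h ` {..<n}" gpos] posi_gpos by blast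
    hence "F h \<in> gpos" using F h by blast
    thus "F ` (Pi\<^sub>E {..<n} As) \<in> {B. B \<subseteq> gambles \<and> B \<inter> gpos \<noteq> {}}" using sub h by blast
  qed
qed


definition W :: "('w \<Rightarrow> real) set \<Rightarrow> nat \<Rightarrow> (nat \<Rightarrow> ('w \<Rightarrow> real) set) \<Rightarrow> bool" where
  "W B n As \<longleftrightarrow> (\<forall>g\<in>Pi\<^sub>E {..<n} As. (\<lambda>_. 0) \<notin> EE (g ` {..<n}) \<longrightarrow>
                 (\<exists>f\<in>B. f \<in> EE (g ` {..<n})))"

lemma Ext_ne': "\<A> \<noteq> {} \<Longrightarrow> B \<in> Ext \<A> \<longleftrightarrow> B \<subseteq> gambles \<and> (\<exists>n::nat. \<exists>As. n \<ge> 1 \<and> (\<forall>i<n. As i \<in> \<A>) \<and> W B n As)"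
  unfolding Ext_ne W_def by simp

lemma A_sub:
  assumes "\<A> \<subseteq> Pow gambles"
  shows "\<A> \<subseteq> Ext \<A>"
proof
  fix B assume B: "B \<in> \<A>"
  hence ne: "\<A> \<noteq> {}" by blast
  have "W B 1 (\<lambda>_. B)" unfolding W_def
  proof (intro ballI impI)
    fix g assume g: "g \<in> Pi\<^sub>E {..<1::nat} (\<lambda>_. B)"
    hence "g 0 \<in> B" by auto
    moreover have "g 0 \<in> EE (g ` {..<1::nat})" using EE_base(1)[of "g ` {..<1::nat}"] by auto
    ultimately show "\<exists>f\<in>B. f \<in> EE (g ` {..<1::nat})" by blast
  qed
  moreover have "B \<subseteq> gambles" using B assms by blast
  ultimately show "B \<in> Ext \<A>" unfolding Ext_ne'[OF ne] using B
    by (intro conjI exI[of _ 1] exI[of _ "\<lambda>_. B"]) auto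
qed

lemma coh_ne:
  fixes \<A> :: "('w \<Rightarrow> real) set set"
  assumes ne: "\<A> \<noteq> {}" and E0: "{} \<notin> Ext \<A>"
  shows "coherent (Ext \<A>)"
  unfolding coherent_def
proof (intro conjI)
  show "{} \<notin> Ext \<A>" by (rule E0)
  show "\<forall>A\<in>Ext \<A>. A - {\<lambda>_. 0} \<in> Ext \<A>"
  proof
    fix A assume "A \<in> Ext \<A>"
    then obtain n :: nat and As where A: "A \<subseteq> gambles" "n \<ge> 1" "\<forall>i<n. As i \<in> \<A>" "W A n As"
      unfolding Ext_ne'[OF ne] by blast
    have "W (A - {\<lambda>_. 0}) n As" using A(4) unfolding W_def by fastforce
    thus "A - {\<lambda>_. 0} \<in> Ext \<A>" unfolding Ext_ne'[OF ne] using A by blast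
  qed
  obtain A0 where A0: "A0 \<in> \<A>" using ne by blast
  show "\<forall>g\<in>gpos. {g} \<in> Ext \<A>"
  proof
    fix g :: "'w \<Rightarrow> real" assume g: "g \<in> gpos"
    have "g \<in> EE S" for S using EE_base(2) g by blast
    hence "W {g} 1 (\<lambda>_. A0)" unfolding W_def by blast
    moreover have "{g} \<subseteq> gambles" using g by (simp add: gpos_iff)
    ultimately show "{g} \<in> Ext \<A>" unfolding Ext_ne'[OF ne] using A0
      by (intro conjI exI[of _ 1] exI[of _ "\<lambda>_. A0"]) auto
  qed
  show "\<forall>A\<in>Ext \<A>. \<forall>B. A \<subseteq> B \<and> B \<subseteq> gambles \<longrightarrow> B \<in> Ext \<A>"
  proof (intro ballI allI impI, elim conjE)
    fix A B assume "A \<in> Ext \<A>" "A \<subseteq> B" "B \<subseteq> gambles"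
    moreover from \<open>A \<in> Ext \<A>\<close> obtain n :: nat and As where
      A: "n \<ge> 1" "\<forall>i<n. As i \<in> \<A>" "W A n As"
      unfolding Ext_ne'[OF ne] by blast
    moreover have "W B n As" using A(3) \<open>A \<subseteq> B\<close> unfolding W_def by blast
    ultimately show "B \<in> Ext \<A>" unfolding Ext_ne'[OF ne] by blast
  qed
  show "\<forall>A\<in>Ext \<A>. \<forall>F. (\<forall>g\<in>A. F g \<in> gambles \<and> (\<forall>w. g w \<le> F g w)) \<longrightarrow> F ` A \<in> Ext \<A>"
  proof (intro ballI allI impI)
    fix A F assume "A \<in> Ext \<A>" and F: "\<forall>g\<in>A. F g \<in> gambles \<and> (\<forall>w. g w \<le> F g w)"
    then obtain n :: nat and As where A: "A \<subseteq> gambles" "n \<ge> 1" "\<forall>i<n. As i \<in> \<A>" "W A n As"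
      unfolding Ext_ne'[OF ne] by blast
    have "W (F ` A) n As" unfolding W_def
    proof (intro ballI impI)
      fix g assume "g \<in> Pi\<^sub>E {..<n} As" "(\<lambda>_. 0) \<notin> EE (g ` {..<n})"
      then obtain f where f: "f \<in> A" "f \<in> EE (g ` {..<n})" using A(4) unfolding W_def by blast
      have "F f \<in> EE (g ` {..<n})"
        using EE_up[OF f(2)] f(1) A(1) F by blast
      thus "\<exists>f\<in>F ` A. f \<in> EE (g ` {..<n})" using f(1) by blast
    qed
    moreover have "F ` A \<subseteq> gambles" using F by blast
    ultimately show "F ` A \<in> Ext \<A>" unfolding Ext_ne'[OF ne] using A by blast
  qed
  show "\<forall>n::nat. \<forall>Bs F. n \<ge> 1 \<and> (\<forall>i<n. Bs i \<in> Ext \<A>)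
        \<and> (\<forall>g\<in>Pi\<^sub>E {..<n} Bs. F g \<in> posi (g ` {..<n}))
        \<longrightarrow> F ` (Pi\<^sub>E {..<n} Bs) \<in> Ext \<A>"
  proof (intro allI impI, elim conjE)
    fix n :: nat and Bs F
    assume n: "n \<ge> 1" and Bs: "\<forall>i<n. Bs i \<in> Ext \<A>"
      and F: "\<forall>g\<in>Pi\<^sub>E {..<n} Bs. F g \<in> posi (g ` {..<n})"
    have Bsg: "\<forall>i<n. Bs i \<subseteq> gambles" using Bs Ext_sub by blast
    have sub: "F ` (Pi\<^sub>E {..<n} Bs) \<subseteq> gambles"
      using PiE_gambles_posi[OF Bsg] F by blast
    have "\<forall>i<n. \<exists>m As. m \<ge> 1 \<and> (\<forall>j<m. As j \<in> \<A>) \<and> W (Bs i) m As"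
      using Bs unfolding Ext_ne'[OF ne] by blast
    hence "\<forall>i. \<exists>p. i < n \<longrightarrow> (\<forall>j<fst p. snd p j \<in> \<A>) \<and> W (Bs i) (fst p) (snd p)"
      by (metis fst_conv snd_conv)
    then obtain p where p: "\<forall>i. i < n \<longrightarrow> (\<forall>j<fst (p i). snd (p i) j \<in> \<A>) \<and> W (Bs i) (fst (p i)) (snd (p i))"
      by (metis choice)
    define ns where "ns i = fst (p i)" for i
    define Ass where "Ass i = snd (p i)" for i
    have "\<forall>i<n. \<forall>j<ns i. Ass i j \<in> \<A>" using p by (simp add: ns_def Ass_def)
    from combine[OF A0 this] obtain N :: nat and Cs where
      N: "N \<ge> 1" "\<forall>j<N. Cs j \<in> \<A>"
      and G: "\<forall>g\<in>Pi\<^sub>E {..<N} Cs. \<forall>i<n. \<exists>g'\<in>Pi\<^sub>E {..<ns i} (Ass i). g' ` {..<ns i} \<subseteq> g ` {..<N}"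
      by blast
    have "W (F ` (Pi\<^sub>E {..<n} Bs)) N Cs" unfolding W_def
    proof (intro ballI impI)
      fix g assume g: "g \<in> Pi\<^sub>E {..<N} Cs" and z: "(\<lambda>_. 0) \<notin> EE (g ` {..<N})"
      have "\<exists>f. f \<in> Bs i \<and> f \<in> EE (g ` {..<N})" if i: "i < n" for i
      proof -
        obtain g' where g': "g' \<in> Pi\<^sub>E {..<ns i} (Ass i)" "g' ` {..<ns i} \<subseteq> g ` {..<N}"
          using G g i by blast
        have EEs: "EE (g' ` {..<ns i}) \<subseteq> EE (g ` {..<N})" by (rule EE_mono[OF g'(2)])
        hence "(\<lambda>_. 0) \<notin> EE (g' ` {..<ns i})" using z by blast
        moreover have "W (Bs i) (ns i) (Ass i)" using p i by (simp add: ns_def Ass_def)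
        ultimately obtain f where "f \<in> Bs i" "f \<in> EE (g' ` {..<ns i})"
          using g'(1) unfolding W_def by blast
        thus ?thesis using EEs by blast
      qed
      hence "\<forall>i. \<exists>f. i < n \<longrightarrow> f \<in> Bs i \<and> f \<in> EE (g ` {..<N})" by blast
      then obtain ff where ff: "\<forall>i. i < n \<longrightarrow> ff i \<in> Bs i \<and> ff i \<in> EE (g ` {..<N})"
        by (metis choice)
      define h where "h = restrict ff {..<n}"
      have h: "h \<in> Pi\<^sub>E {..<n} Bs" using ff by (auto simp: h_def)
      have "h ` {..<n} \<subseteq> EE (g ` {..<N})" using ff by (auto simp: h_def)
      hence "posi (h ` {..<n}) \<subseteq> posi (EE (g ` {..<N}))" by (rule posi_mono)
      also have "\<dots> \<subseteq> EE (g ` {..<N})" by (rule EE_posi)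
      finally have "F h \<in> EE (g ` {..<N})" using F h by blast
      thus "\<exists>f\<in>F ` Pi\<^sub>E {..<n} Bs. f \<in> EE (g ` {..<N})" using h by blast
    qed
    thus "F ` (Pi\<^sub>E {..<n} Bs) \<in> Ext \<A>" unfolding Ext_ne'[OF ne] using sub N by blast
  qed
qed


theorem mainTheorem3:
  fixes \<A> :: "('w \<Rightarrow> real) set set"
  assumes "\<A> \<subseteq> Pow gambles"
  shows "({} \<notin> Ext \<A> \<longrightarrow>
            coherent (Ext \<A>) \<and> \<A> \<subseteq> Ext \<A> \<and>
            (\<forall>K. K \<subseteq> Pow gambles \<and> coherent K \<and> \<A> \<subseteq> K \<longrightarrow> Ext \<A> \<subseteq> K))
       \<and> ({} \<in> Ext \<A> \<longrightarrow> \<not> (\<exists>K. K \<subseteq> Pow gambles \<and> coherent K \<and> \<A> \<subseteq> K))"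
proof (intro conjI impI)
  assume E: "{} \<notin> Ext \<A>"
  show "coherent (Ext \<A>)"
  proof (cases "\<A> = {}")
    case True thus ?thesis using coh_empty by simp
  next
    case False thus ?thesis using coh_ne[OF False E] by simp
  qed
  show "\<A> \<subseteq> Ext \<A>" by (rule A_sub[OF assms])
  show "\<forall>K. K \<subseteq> Pow gambles \<and> coherent K \<and> \<A> \<subseteq> K \<longrightarrow> Ext \<A> \<subseteq> K"
  proof (intro allI impI subsetI, elim conjE)
    fix K B assume "coherent K" "\<A> \<subseteq> K" "B \<in> Ext \<A>"
    thus "B \<in> K" by (rule minimal)
  qed
next
  assume E: "{} \<in> Ext \<A>"
  show "\<not> (\<exists>K. K \<subseteq> Pow gambles \<and> coherent K \<and> \<A> \<subseteq> K)"
  proof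
    assume "\<exists>K. K \<subseteq> Pow gambles \<and> coherent K \<and> \<A> \<subseteq> K"
    then obtain K where K: "coherent K" "\<A> \<subseteq> K" by blast
    have "{} \<in> K" using minimal[OF K E] .
    moreover have "{} \<notin> K" using K(1) unfolding coherent_def by blast
    ultimately show False by contradiction
  qed
qed

end
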